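(* For every digraph $X=(V,E)$ and every edge $e\in E$, $u_X(m)=u_{X\setminus e}(m)-u_{X/e}(m)$.
   Context: A digraph $X=(V,E)$: $V$ finite, $E\subset\{(u,v)\in V\times V\mid u\ne v\}$. $\Sigma_V$ is the set of bijections $\sigma:[n]\to V$ ($n=|V|$), $X\mathrm{Des}(\sigma)=\{i\in[n-1]\mid(\sigma_i,\sigma_{i+1})\in E\}$; $F_I=\sum x_{i_1}\cdots x_{i_n}$ over $1\le i_1\le\cdots\le i_n$ with $i_j<i_{j+1}$ for $j\in I$; $U_X=\sum_{\sigma\in\Sigma_V}F_{X\mathrm{Des}(\sigma)}$; the Redei–Berge polynomial is $u_X(m)=U_X(1,\dots,1,0,\dots)$ with $m$ ones (equivalently, the number of pairs $(f,\sigma)$ with $f:V\to[m]$ and $\sigma\in\Sigma_V$ satisfying $f(\sigma_1)\le\cdots\le f(\sigma_n)$ and $f(\sigma_j)<f(\sigma_{j+1})$ whenever $(\sigma_j,\sigma_{j+1})\in E$). Deletion: $X\setminus e=(V,E\setminus\{e\})$. Contraction by $e=(u,v)$: $X/e=(V',E')$ with $V'=(V\setminus\{u,v\})\cup\{e\}$, $E'$ containing all edges of $E$ with both endpoints different from $u,v$, and for $w\ne u,v$: $(w,e)\in E'$ iff $(w,u)\in E$, and $(e,w)\in E'$ iff $(v,w)\in E$ (no other edges). *)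

theory Defs
  imports Main "HOL-Library.FuncSet"
begin

definition digraph :: "'a set \<Rightarrow> ('a \<times> 'a) set \<Rightarrow> bool" where
  "digraph V E \<longleftrightarrow> finite V \<and> E \<subseteq> {(u, v). u \<in> V \<and> v \<in> V \<and> u \<noteq> v}"

definition Sigma_V :: "'a set \<Rightarrow> (nat \<Rightarrow> 'a) set" where
  "Sigma_V V = {\<sigma>. \<sigma> \<in> {1..card V} \<rightarrow>\<^sub>E V \<and> bij_betw \<sigma> {1..card V} V}"

definition redei_berge :: "'a set \<Rightarrow> ('a \<times> 'a) set \<Rightarrow> nat \<Rightarrow> nat" where
  "redei_berge V E m = card {(f, \<sigma>). f \<in> V \<rightarrow>\<^sub>E {1..m} \<and> \<sigma> \<in> Sigma_V V \<and>
      (\<forall>j. 1 \<le> j \<and> j < card V \<longrightarrow>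
          f (\<sigma> j) \<le> f (\<sigma> (Suc j)) \<and>
          ((\<sigma> j, \<sigma> (Suc j)) \<in> E \<longrightarrow> f (\<sigma> j) < f (\<sigma> (Suc j))))}"

definition del_edge :: "('a \<times> 'a) set \<Rightarrow> 'a \<times> 'a \<Rightarrow> ('a \<times> 'a) set" where
  "del_edge E e = E - {e}"

text \<open>Contraction by e = (u, v): the new vertex e is represented by None,
  old vertices w by Some w.\<close>
definition contr_V :: "'a set \<Rightarrow> 'a \<times> 'a \<Rightarrow> 'a option set" where
  "contr_V V e = Some ` (V - {fst e, snd e}) \<union> {None}"

definition contr_E :: "('a \<times> 'a) set \<Rightarrow> 'a \<times> 'a \<Rightarrow> ('a option \<times> 'a option) set" where
  "contr_E E e =
     {(Some a, Some b) | a b. (a, b) \<in> E \<and> a \<notin> {fst e, snd e} \<and> b \<notin> {fst e, snd e}}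
   \<union> {(Some w, None) | w. (w, fst e) \<in> E \<and> w \<notin> {fst e, snd e}}
   \<union> {(None, Some w) | w. (snd e, w) \<in> E \<and> w \<notin> {fst e, snd e}}"

end

theory Submission
  imports Defs
begin

definition RB :: "'a set \<Rightarrow> ('a \<times> 'a) set \<Rightarrow> nat \<Rightarrow> (('a \<Rightarrow> nat) \<times> 'a list) set" where
 "RB V E m = {(f, xs). f \<in> V \<rightarrow>\<^sub>E {1..m} \<and> distinct xs \<and> set xs = V \<and>
     successively (\<lambda>a b. f a \<le> f b \<and> ((a,b)\<in>E \<longrightarrow> f a < f b)) xs}"

lemma bij_shift: "bij_betw (\<lambda>i. i - 1) {1..n::nat} {..<n}"
  by (rule bij_betw_byWitness[where f'="\<lambda>i. i + 1"]) (auto simp: image_iff; presburger)+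

lemma redei_RB:
  assumes "finite V"
  shows "redei_berge V E m = card (RB V E m)"
proof -
  define n where "n = card V"
  define P where "P f = (\<lambda>a b. f a \<le> f b \<and> ((a,b)\<in>E \<longrightarrow> f a < f b))" for f :: "'a \<Rightarrow> nat"
  define S where "S = {(f, \<sigma>). f \<in> V \<rightarrow>\<^sub>E {1..m} \<and> \<sigma> \<in> Sigma_V V \<and>
      (\<forall>j. 1 \<le> j \<and> j < card V \<longrightarrow>
          f (\<sigma> j) \<le> f (\<sigma> (Suc j)) \<and>
          ((\<sigma> j, \<sigma> (Suc j)) \<in> E \<longrightarrow> f (\<sigma> j) < f (\<sigma> (Suc j))))}"
  define L where "L = [1..<Suc n]"
  have Llen: "length L = n" and Lnth: "\<And>i. i < n \<Longrightarrow> L ! i = Suc i" and Lset: "set L = {1..n}" and Ldist: "distinct L"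
    unfolding L_def by (auto simp del: upt_Suc simp: nth_upt)
  define h where "h = (\<lambda>(f::'a\<Rightarrow>nat,\<sigma>::nat\<Rightarrow>'a). (f, map \<sigma> L))"
  define h' where "h' = (\<lambda>(f::'a\<Rightarrow>nat,xs::'a list). (f, \<lambda>i. if i \<in> {1..n} then xs!(i-1) else undefined))"
  have RBeq: "RB V E m = {(f, xs). f \<in> V \<rightarrow>\<^sub>E {1..m} \<and> distinct xs \<and> set xs = V \<and> successively (P f) xs}"
    unfolding RB_def P_def by simp
  have "bij_betw h S (RB V E m)"
  proof (rule bij_betw_byWitness[where f'=h'])
    show "\<forall>a\<in>S. h' (h a) = a"
    proof
      fix a assume "a \<in> S"
      then obtain f \<sigma> where a: "a = (f,\<sigma>)" and s: "\<sigma> \<in> Sigma_V V" unfolding S_def by auto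
      have "(\<lambda>i. if i \<in> {1..n} then (map \<sigma> L)!(i-1) else undefined) = \<sigma>"
      proof
        fix i show "(if i \<in> {1..n} then (map \<sigma> L)!(i-1) else undefined) = \<sigma> i"
        proof (cases "i \<in> {1..n}")
          case True
          then have "i - 1 < length L" "L ! (i-1) = i" by (auto simp: Llen Lnth)
          then show ?thesis using True by simp
        next
          case False
          then show ?thesis
          using s unfolding Sigma_V_def n_def[symmetric] by (auto simp: PiE_def extensional_def)
        qed
      qed
      then show "h' (h a) = a" unfolding a h_def h'_def by (simp del: upt_Suc)
    qed
  next
    show "\<forall>a\<in>RB V E m. h (h' a) = a"
    proof
      fix a assume "a \<in> RB V E m"
      then obtain f xs where a: "a = (f,xs)" and d: "distinct xs" "set xs = V" unfolding RB_def by auto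
      have len: "length xs = n" using distinct_card[OF d(1)] d(2) n_def by simp
      have "map (\<lambda>i. if i \<in> {1..n} then xs!(i-1) else undefined) L = xs"
        by (rule nth_equalityI) (auto simp: len Llen Lnth)
      then show "h (h' a) = a" unfolding a h_def h'_def by simp
    qed
  next
    show "h ` S \<subseteq> RB V E m"
    proof
      fix b assume "b \<in> h ` S"
      then obtain f \<sigma> where b: "b = h (f,\<sigma>)" and fs: "(f,\<sigma>) \<in> S" by auto
      have f: "f \<in> V \<rightarrow>\<^sub>E {1..m}" and s: "\<sigma> \<in> Sigma_V V"
        and c: "\<forall>j. 1 \<le> j \<and> j < n \<longrightarrow> P f (\<sigma> j) (\<sigma> (Suc j))"
        using fs unfolding S_def P_def n_def by auto
      have bij: "bij_betw \<sigma> {1..n} V" using s unfolding Sigma_V_def n_def by auto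
      have st: "set L = {1..n}" by (rule Lset)
      have "distinct (map \<sigma> L)"
        using bij unfolding bij_betw_def by (simp add: distinct_map st Ldist)
      moreover have "set (map \<sigma> L) = V"
        using bij unfolding bij_betw_def by (simp add: st)
      moreover have "successively (P f) (map \<sigma> L)"
        unfolding successively_conv_nth
      proof (intro allI impI)
        fix i assume "Suc i < length (map \<sigma> L)"
        then have "Suc i < n" by (simp add: Llen)
        then show "P f (map \<sigma> L ! i) (map \<sigma> L ! Suc i)"
          using c[rule_format, of "Suc i"] by (simp add: Lnth Llen)
      qed
      ultimately show "b \<in> RB V E m" unfolding b h_def RBeq using f by simp
    qed
  next
    show "h' ` RB V E m \<subseteq> S"
    proof
      fix b assume "b \<in> h' ` RB V E m"
      then obtain f xs where b: "b = h' (f,xs)" and fx: "(f,xs) \<in> RB V E m" by auto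
      have f: "f \<in> V \<rightarrow>\<^sub>E {1..m}" and d: "distinct xs" "set xs = V" and sc: "successively (P f) xs"
        using fx unfolding RBeq by auto
      have len: "length xs = n" using distinct_card[OF d(1)] d(2) n_def by simp
      define \<sigma> where "\<sigma> = (\<lambda>i. if i \<in> {1..n} then xs!(i-1) else undefined)"
      have "bij_betw ((!) xs \<circ> (\<lambda>i. i - 1)) {1..n} V"
        by (rule bij_betw_trans[OF bij_shift bij_betw_nth]) (use d len in auto)
      then have bij: "bij_betw \<sigma> {1..n} V"
        by (rule bij_betw_cong[THEN iffD1, rotated]) (auto simp: \<sigma>_def)
      have "\<sigma> \<in> {1..n} \<rightarrow>\<^sub>E V"
        using bij unfolding bij_betw_def by (auto simp: \<sigma>_def)
      then have s: "\<sigma> \<in> Sigma_V V" using bij unfolding Sigma_V_def n_def by simp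
      have c: "\<forall>j. 1 \<le> j \<and> j < n \<longrightarrow> P f (\<sigma> j) (\<sigma> (Suc j))"
      proof (intro allI impI)
        fix j assume j: "1 \<le> j \<and> j < n"
        then have "P f (xs ! (j-1)) (xs ! Suc (j-1))"
          using successively_nth[OF sc, of "j-1"] len by simp
        then show "P f (\<sigma> j) (\<sigma> (Suc j))" using j by (simp add: \<sigma>_def)
      qed
      show "b \<in> S" unfolding b h'_def S_def using f s c \<sigma>_def
        unfolding P_def n_def by simp
    qed
  qed
  then have "card S = card (RB V E m)" by (rule bij_betw_same_card)
  then show ?thesis unfolding redei_berge_def S_def by simp
qed

definition cl :: "'a \<Rightarrow> 'a \<Rightarrow> 'a list \<Rightarrow> 'a option list" where
  "cl u v xs = concat (map (\<lambda>x. if x = u then [None] else if x = v then [] else [Some x]) xs)"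
definition el :: "'a \<Rightarrow> 'a \<Rightarrow> 'a option list \<Rightarrow> 'a list" where
  "el u v ys = concat (map (\<lambda>x. case x of None \<Rightarrow> [u,v] | Some w \<Rightarrow> [w]) ys)"

lemma cl_plain: "u \<notin> set ys \<Longrightarrow> v \<notin> set ys \<Longrightarrow> cl u v ys = map Some ys"
  by (induction ys) (auto simp: cl_def)

lemma el_plain: "el u v (map Some ys) = ys"
  by (induction ys) (auto simp: el_def)

lemma cl_split: "u \<noteq> v \<Longrightarrow> u \<notin> set ys \<Longrightarrow> v \<notin> set ys \<Longrightarrow> u \<notin> set zs \<Longrightarrow> v \<notin> set zs \<Longrightarrow>
   cl u v (ys @ u # v # zs) = map Some ys @ None # map Some zs"
  using cl_plain[of u ys v] cl_plain[of u zs v] by (simp add: cl_def)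

lemma el_split: "el u v (map Some ys @ None # map Some zs) = ys @ u # v # zs"
  using el_plain[of u v ys] el_plain[of u v zs] by (simp add: el_def)

lemma dist_set_equiv:
  assumes "u \<in> V" "v \<in> V" "u \<noteq> v" "u \<notin> set ys" "v \<notin> set ys" "u \<notin> set zs" "v \<notin> set zs"
  shows "(distinct (ys @ u # v # zs) \<and> set (ys @ u # v # zs) = V) \<longleftrightarrow>
    (distinct (map Some ys @ None # map Some zs) \<and>
     set (map Some ys @ None # map Some zs) = Some ` (V - {u, v}) \<union> {None})"
proof -
  have d: "distinct (ys @ u # v # zs) \<longleftrightarrow> distinct (map Some ys @ None # map Some zs)"
    using assms by (auto simp: distinct_map)
  have s1: "set (ys @ u # v # zs) = V \<longleftrightarrow> set ys \<union> set zs = V - {u,v}"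
    using assms by auto
  have s2: "set (map Some ys @ None # map Some zs) = Some ` (V - {u, v}) \<union> {None} \<longleftrightarrow>
      Some ` (set ys \<union> set zs) = Some ` (V - {u,v})"
    by auto
  have s3: "Some ` (set ys \<union> set zs) = Some ` (V - {u,v}) \<longleftrightarrow> set ys \<union> set zs = V - {u,v}"
    using inj_image_eq_iff[of Some] by (metis option.inject injI)
  show ?thesis using d s1 s2 s3 by blast
qed

lemma succ_equiv:
  fixes f :: "'a \<Rightarrow> nat" and g :: "'a option \<Rightarrow> nat"
  assumes uv: "u \<noteq> v" and e: "e = (u, v)"
    and sub: "set ys \<subseteq> V - {u,v}" "set zs \<subseteq> V - {u,v}"
    and g1: "g None = f u" and g2: "f v = f u" and g3: "\<And>w. w \<in> V - {u,v} \<Longrightarrow> g (Some w) = f w"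
  shows "successively (\<lambda>a b. f a \<le> f b \<and> ((a,b) \<in> E - {e} \<longrightarrow> f a < f b)) (ys @ u # v # zs) \<longleftrightarrow>
     successively (\<lambda>a b. g a \<le> g b \<and> ((a,b) \<in> contr_E E e \<longrightarrow> g a < g b)) (map Some ys @ None # map Some zs)"
    (is "successively ?P _ \<longleftrightarrow> successively ?Q _")
proof -
  have ee: "fst e = u" "snd e = v" using e by auto
  have Q_SS: "?Q (Some a) (Some b) \<longleftrightarrow> ?P a b" if "a \<in> V - {u,v}" "b \<in> V - {u,v}" for a b
    using that g3[of a] g3[of b] e by (auto simp: contr_E_def)
  have Q_SN: "?Q (Some a) None \<longleftrightarrow> ?P a u" if "a \<in> V - {u,v}" for a
    using that g3[of a] g1 e by (auto simp: contr_E_def)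
  have Q_NS: "?Q None (Some b) \<longleftrightarrow> ?P v b" if "b \<in> V - {u,v}" for b
    using that g3[of b] g1 g2 e uv by (auto simp: contr_E_def)
  have Puv: "?P u v" using g2 e by auto
  have A: "successively ?Q (map Some ys) \<longleftrightarrow> successively ?P ys"
    unfolding successively_map
    by (rule successively_cong[OF _ refl], rule Q_SS) (use sub in auto)
  have B: "successively ?Q (map Some zs) \<longleftrightarrow> successively ?P zs"
    unfolding successively_map
    by (rule successively_cong[OF _ refl], rule Q_SS) (use sub in auto)
  have C: "ys \<noteq> [] \<Longrightarrow> ?Q (Some (last ys)) None \<longleftrightarrow> ?P (last ys) u"
    using Q_SN sub last_in_set by blast
  have D: "zs \<noteq> [] \<Longrightarrow> ?Q None (Some (hd zs)) \<longleftrightarrow> ?P v (hd zs)"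
    using Q_NS sub hd_in_set by blast
  show ?thesis
    unfolding successively_append_iff successively_Cons
    using A B C D Puv by (auto simp: last_map hd_map)
qed

lemma exists_bad:
  "successively P xs \<Longrightarrow> \<not> successively Q xs \<Longrightarrow> \<exists>ys a b zs. xs = ys @ a # b # zs \<and> P a b \<and> \<not> Q a b"
proof (induction xs rule: induct_list012)
  case (3 x y zs)
  show ?case
  proof (cases "Q x y")
    case True
    then have "successively P (y # zs)" "\<not> successively Q (y # zs)" using 3 by auto
    then obtain ys a b ws where "y # zs = ys @ a # b # ws" "P a b" "\<not> Q a b" using 3 by blast
    then show ?thesis by (metis append_Cons)
  next
    case False
    then show ?thesis using 3 by (metis append_Nil successively.simps(3))
  qed
qed auto

lemma map_the_Some: "None \<notin> set l \<Longrightarrow> map Some (map the l) = l"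
  by (induction l) auto

lemma RB_finite: "finite V \<Longrightarrow> finite (RB V E m)"
proof -
  assume fin: "finite V"
  have "RB V E m \<subseteq> (V \<rightarrow>\<^sub>E {1..m}) \<times> {xs. set xs \<subseteq> V \<and> length xs \<le> card V}"
    unfolding RB_def using distinct_card by fastforce
  moreover have "finite ((V \<rightarrow>\<^sub>E {1..m}) \<times> {xs. set xs \<subseteq> V \<and> length xs \<le> card V})"
    using fin by (intro finite_cartesian_product finite_PiE finite_lists_length_le) auto
  ultimately show ?thesis by (rule finite_subset)
qed

lemma bij_witness2:
  assumes "\<forall>a\<in>A. g (f a) = a \<and> f a \<in> B" "\<forall>b\<in>B. f (g b) = b \<and> g b \<in> A"
  shows "bij_betw f A B"
  by (rule bij_betw_byWitness[where f'=g]) (use assms in auto)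

theorem mainTheorem13:
  fixes V :: "'a set" and E :: "('a \<times> 'a) set" and e :: "'a \<times> 'a" and m :: nat
  assumes "digraph V E" and "e \<in> E"
  shows "int (redei_berge V E m)
           = int (redei_berge V (del_edge E e) m) - int (redei_berge (contr_V V e) (contr_E E e) m)"
proof -
  obtain u v where e: "e = (u, v)" by (cases e)
  have fin: "finite V" and uV: "u \<in> V" and vV: "v \<in> V" and uv: "u \<noteq> v"
    using assms unfolding digraph_def e by auto
  have ee: "fst e = u" "snd e = v" using e by auto
  define A where "A = RB V E m"
  define B where "B = RB V (E - {e}) m"
  define C where "C = RB (contr_V V e) (contr_E E e) m"
  define D where "D = {(f, xs) \<in> B. \<exists>ys zs. xs = ys @ u # v # zs \<and> f u = f v}"
  have finC: "finite (contr_V V e)" using fin unfolding contr_V_def by auto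
  have finB: "finite B" unfolding B_def using RB_finite[OF fin] .
  have AB: "A \<subseteq> B"
    unfolding A_def B_def RB_def by (auto elim!: successively_mono)
  have AD: "A \<inter> D = {}"
  proof (rule ccontr)
    assume "A \<inter> D \<noteq> {}"
    then obtain f xs ys zs where "(f, xs) \<in> A" "xs = ys @ u # v # zs" "f u = f v"
      unfolding D_def by auto
    then have "successively (\<lambda>a b. f a \<le> f b \<and> ((a,b)\<in>E \<longrightarrow> f a < f b)) (ys @ u # v # zs)"
      unfolding A_def RB_def by auto
    then have "(u,v) \<in> E \<longrightarrow> f u < f v" by (simp add: successively_append_iff)
    then show False using assms(2) e \<open>f u = f v\<close> by auto
  qed
  have BAD: "B = A \<union> D"
  proof
    show "A \<union> D \<subseteq> B" using AB unfolding D_def by auto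
  next
    show "B \<subseteq> A \<union> D"
    proof
      fix p assume pB: "p \<in> B"
      obtain f xs where p: "p = (f, xs)" by (cases p)
      show "p \<in> A \<union> D"
      proof (cases "p \<in> A")
        case False
        have s: "successively (\<lambda>a b. f a \<le> f b \<and> ((a,b)\<in>E - {e} \<longrightarrow> f a < f b)) xs"
          using pB unfolding p B_def RB_def by auto
        have "\<not> successively (\<lambda>a b. f a \<le> f b \<and> ((a,b)\<in>E \<longrightarrow> f a < f b)) xs"
          using pB False unfolding p B_def A_def RB_def by auto
        from exists_bad[OF s this] obtain ys a b zs where
          "xs = ys @ a # b # zs" "f a \<le> f b" "(a,b)\<in>E - {e} \<longrightarrow> f a < f b"
          "\<not> (f a \<le> f b \<and> ((a,b)\<in>E \<longrightarrow> f a < f b))" by blast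
        then have "xs = ys @ u # v # zs" "f u = f v" using e by auto
        then show ?thesis using pB unfolding p D_def by auto
      qed simp
    qed
  qed
  have cardB: "card B = card A + card D"
    using BAD AD finB card_Un_disjoint[of A D] by (metis finite_Un)
  define cf where "cf f = (\<lambda>x. if x \<in> contr_V V e then (case x of None \<Rightarrow> f u | Some w \<Rightarrow> f w) else undefined)"
    for f :: "'a \<Rightarrow> nat"
  define ef where "ef g = (\<lambda>w. if w \<in> V then (if w = u \<or> w = v then g None else g (Some w)) else undefined)"
    for g :: "'a option \<Rightarrow> nat"
  have cV: "contr_V V e = Some ` (V - {u, v}) \<union> {None}" unfolding contr_V_def ee ..
  have "bij_betw (\<lambda>(f, xs). (cf f, cl u v xs)) D C"
  proof (rule bij_witness2[where g="\<lambda>(g, ys). (ef g, el u v ys)"])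
    show "\<forall>a\<in>D. (\<lambda>(g, ys). (ef g, el u v ys)) ((\<lambda>(f, xs). (cf f, cl u v xs)) a) = a
         \<and> (\<lambda>(f, xs). (cf f, cl u v xs)) a \<in> C"
    proof
      fix p assume pD: "p \<in> D"
      then obtain f ys zs where p: "p = (f, ys @ u # v # zs)" and fuv: "f u = f v"
        and pB: "(f, ys @ u # v # zs) \<in> B" unfolding D_def by auto
      have fP: "f \<in> V \<rightarrow>\<^sub>E {1..m}" and d: "distinct (ys @ u # v # zs)" "set (ys @ u # v # zs) = V"
        and sc: "successively (\<lambda>a b. f a \<le> f b \<and> ((a,b)\<in>E - {e} \<longrightarrow> f a < f b)) (ys @ u # v # zs)"
        using pB unfolding B_def RB_def by auto
      have nin: "u \<notin> set ys" "v \<notin> set ys" "u \<notin> set zs" "v \<notin> set zs" using d(1) by auto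
      have sub: "set ys \<subseteq> V - {u,v}" "set zs \<subseteq> V - {u,v}" using d nin by auto
      have clx: "cl u v (ys @ u # v # zs) = map Some ys @ None # map Some zs"
        using cl_split[OF uv nin] .
      have "ef (cf f) = f"
      proof
        fix w show "ef (cf f) w = f w"
          using fP fuv uV by (auto simp: ef_def cf_def cV PiE_def extensional_def)
      qed
      then have L1: "(\<lambda>(g, ys). (ef g, el u v ys)) ((\<lambda>(f, xs). (cf f, cl u v xs)) p) = p"
        unfolding p using clx el_split by simp
      have cfP: "cf f \<in> contr_V V e \<rightarrow>\<^sub>E {1..m}"
      proof (rule PiE_I)
        fix x assume "x \<in> contr_V V e"
        then have "x = None \<or> (\<exists>w. x = Some w \<and> w \<in> V)" unfolding cV by auto
        then show "cf f x \<in> {1..m}"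
        proof
          assume "x = None" then show ?thesis using fP uV \<open>x \<in> contr_V V e\<close> unfolding cf_def by auto
        next
          assume "\<exists>w. x = Some w \<and> w \<in> V"
          then obtain w where "x = Some w" "w \<in> V" by blast
          then show ?thesis using fP \<open>x \<in> contr_V V e\<close> unfolding cf_def by auto
        qed
      qed (simp add: cf_def)
      have d2: "distinct (map Some ys @ None # map Some zs) \<and>
          set (map Some ys @ None # map Some zs) = Some ` (V - {u, v}) \<union> {None}"
        using dist_set_equiv[OF uV vV uv nin] d by blast
      have s2: "successively (\<lambda>a b. cf f a \<le> cf f b \<and> ((a,b) \<in> contr_E E e \<longrightarrow> cf f a < cf f b))
          (map Some ys @ None # map Some zs)"
      proof -
        have g1: "cf f None = f u" by (simp add: cf_def cV)
        have g3: "\<And>w. w \<in> V - {u,v} \<Longrightarrow> cf f (Some w) = f w" by (simp add: cf_def cV)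
        show ?thesis using succ_equiv[OF uv e sub g1 fuv[symmetric] g3, of E] sc by blast
      qed
      have "(\<lambda>(f, xs). (cf f, cl u v xs)) p \<in> C"
        unfolding p C_def RB_def using cfP d2 s2 clx cV by simp
      with L1 show "(\<lambda>(g, ys). (ef g, el u v ys)) ((\<lambda>(f, xs). (cf f, cl u v xs)) p) = p \<and> (\<lambda>(f, xs). (cf f, cl u v xs)) p \<in> C" by (rule conjI)
    qed
  next
    show "\<forall>a'\<in>C. (\<lambda>(f, xs). (cf f, cl u v xs)) ((\<lambda>(g, ys). (ef g, el u v ys)) a') = a'
        \<and> (\<lambda>(g, ys). (ef g, el u v ys)) a' \<in> D"
    proof
      fix q assume qC: "q \<in> C"
      then obtain g ys' where q: "q = (g, ys')" by (cases q)
      have gP: "g \<in> contr_V V e \<rightarrow>\<^sub>E {1..m}" and d: "distinct ys'" "set ys' = contr_V V e"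
        and sc: "successively (\<lambda>a b. g a \<le> g b \<and> ((a,b) \<in> contr_E E e \<longrightarrow> g a < g b)) ys'"
        using qC unfolding q C_def RB_def by auto
      have "None \<in> set ys'" using d cV by auto
      then obtain as bs where ys': "ys' = as @ None # bs" using split_list by metis
      have nn: "None \<notin> set as" "None \<notin> set bs" using d(1) ys' by auto
      define ys where "ys = map the as"
      define zs where "zs = map the bs"
      have as: "as = map Some ys" and bs: "bs = map Some zs"
        unfolding ys_def zs_def using map_the_Some nn by metis+
      have "Some ` set ys \<subseteq> Some ` (V - {u,v})" "Some ` set zs \<subseteq> Some ` (V - {u,v})"
        using d(2) cV ys' as bs by auto
      then have sub: "set ys \<subseteq> V - {u,v}" "set zs \<subseteq> V - {u,v}" by auto
      then have nin: "u \<notin> set ys" "v \<notin> set ys" "u \<notin> set zs" "v \<notin> set zs" by auto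
      have ys'2: "ys' = map Some ys @ None # map Some zs" using ys' as bs by simp
      have elx: "el u v ys' = ys @ u # v # zs" unfolding ys'2 by (rule el_split)
      have clx: "cl u v (ys @ u # v # zs) = ys'" unfolding ys'2 by (rule cl_split[OF uv nin])
      have "cf (ef g) = g"
      proof
        fix x show "cf (ef g) x = g x"
          using gP uV by (auto simp: ef_def cf_def cV PiE_def extensional_def split: option.split)
      qed
      then have L1: "(\<lambda>(f, xs). (cf f, cl u v xs)) ((\<lambda>(g, ys). (ef g, el u v ys)) q) = q"
        unfolding q using clx elx by simp
      have efP: "ef g \<in> V \<rightarrow>\<^sub>E {1..m}"
      proof (rule PiE_I)
        fix x assume xV: "x \<in> V"
        have n1: "None \<in> contr_V V e" unfolding cV by simp
        show "ef g x \<in> {1..m}"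
        proof (cases "x = u \<or> x = v")
          case True
          then show ?thesis using PiE_mem[OF gP n1] xV unfolding ef_def by simp
        next
          case False
          then have "Some x \<in> contr_V V e" using xV unfolding cV by simp
          then show ?thesis using PiE_mem[OF gP] False xV unfolding ef_def by simp
        qed
      qed (simp add: ef_def)
      have d2: "distinct (ys @ u # v # zs) \<and> set (ys @ u # v # zs) = V"
        using dist_set_equiv[OF uV vV uv nin] d cV ys'2 by simp
      have euv: "ef g u = ef g v" using uV vV by (simp add: ef_def)
      have s2: "successively (\<lambda>a b. ef g a \<le> ef g b \<and> ((a,b) \<in> E - {e} \<longrightarrow> ef g a < ef g b))
          (ys @ u # v # zs)"
      proof -
        have g1: "g None = ef g u" using uV by (simp add: ef_def)
        have g3: "\<And>w. w \<in> V - {u,v} \<Longrightarrow> g (Some w) = ef g w" by (simp add: ef_def)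
        show ?thesis using succ_equiv[OF uv e sub g1 euv[symmetric] g3, of E] sc ys'2 by blast
      qed
      have "(\<lambda>(g, ys). (ef g, el u v ys)) q \<in> D"
        unfolding q D_def B_def RB_def using efP d2 s2 elx euv by auto
      with L1 show "(\<lambda>(f, xs). (cf f, cl u v xs)) ((\<lambda>(g, ys). (ef g, el u v ys)) q) = q \<and> (\<lambda>(g, ys). (ef g, el u v ys)) q \<in> D" by (rule conjI)
    qed
  qed
  then have "card D = card C" by (rule bij_betw_same_card)
  then have "card B = card A + card C" using cardB by simp
  moreover have "redei_berge V E m = card A" unfolding A_def by (rule redei_RB[OF fin])
  moreover have "redei_berge V (del_edge E e) m = card B" unfolding B_def del_edge_def by (rule redei_RB[OF fin])
  moreover have "redei_berge (contr_V V e) (contr_E E e) m = card C" unfolding C_def by (rule redei_RB[OF finC])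
  ultimately show ?thesis by simp
qed

end
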